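(* Let $H$ be a forest, let $(A,B)$ be a bipartition of $H$ with $|A|=|B|$, and let $n$ be an integer with $0\le n\le |A|$. Then there is a stable set $X$ of $H$ with $|X|=|A|$ and $|X\cap A|=n$.
   Context: A bipartition $(A,B)$ of $H$ is a partition of $V(H)$ into two stable sets. *)

theory Defs
  imports Main
begin

definition simple_graph :: "'a set \<Rightarrow> ('a \<Rightarrow> 'a \<Rightarrow> bool) \<Rightarrow> bool" where
  "simple_graph V E \<longleftrightarrow> finite V \<and> (\<forall>x y. E x y \<longrightarrow> x \<in> V \<and> y \<in> V)
     \<and> (\<forall>x y. E x y \<longrightarrow> E y x) \<and> (\<forall>x. \<not> E x x)"

definition is_cycle :: "'a set \<Rightarrow> ('a \<Rightarrow> 'a \<Rightarrow> bool) \<Rightarrow> 'a list \<Rightarrow> bool" where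
  "is_cycle V E cs \<longleftrightarrow> length cs \<ge> 3 \<and> distinct cs \<and> set cs \<subseteq> V
     \<and> (\<forall>i. Suc i < length cs \<longrightarrow> E (cs ! i) (cs ! Suc i))
     \<and> E (last cs) (hd cs)"

definition forest :: "'a set \<Rightarrow> ('a \<Rightarrow> 'a \<Rightarrow> bool) \<Rightarrow> bool" where
  "forest V E \<longleftrightarrow> simple_graph V E \<and> (\<nexists>cs. is_cycle V E cs)"

definition stable_set :: "'a set \<Rightarrow> ('a \<Rightarrow> 'a \<Rightarrow> bool) \<Rightarrow> 'a set \<Rightarrow> bool" where
  "stable_set V E X \<longleftrightarrow> X \<subseteq> V \<and> (\<forall>x\<in>X. \<forall>y\<in>X. \<not> E x y)"

definition bipartition :: "'a set \<Rightarrow> ('a \<Rightarrow> 'a \<Rightarrow> bool) \<Rightarrow> 'a set \<Rightarrow> 'a set \<Rightarrow> bool" where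
  "bipartition V E A B \<longleftrightarrow> A \<union> B = V \<and> A \<inter> B = {}
     \<and> stable_set V E A \<and> stable_set V E B"

end

theory Submission imports Defs begin

definition ipath :: "('a \<Rightarrow> 'a \<Rightarrow> bool) \<Rightarrow> 'a list \<Rightarrow> bool" where
  "ipath E p \<longleftrightarrow> (\<forall>i. Suc i < length p \<longrightarrow> E (p ! i) (p ! Suc i))"

lemma ipath_Cons: "p \<noteq> [] \<Longrightarrow> ipath E (y # p) \<longleftrightarrow> E y (hd p) \<and> ipath E p"
  unfolding ipath_def
  apply (cases p; simp)
  apply (auto simp: less_Suc_eq_0_disj)
  done

lemma forest_leaf:
  assumes "forest V E" "V \<noteq> {}"
  shows "\<exists>x\<in>V. \<forall>y z. E x y \<longrightarrow> E x z \<longrightarrow> y = z"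
proof -
  have sg: "simple_graph V E" and nc: "\<And>cs. \<not> is_cycle V E cs" using assms(1) unfolding forest_def by auto
  have fin: "finite V" and inV: "\<And>x y. E x y \<Longrightarrow> x \<in> V \<and> y \<in> V"
    and sym: "\<And>x y. E x y \<Longrightarrow> E y x" and irr: "\<And>x. \<not> E x x"
    using sg unfolding simple_graph_def by auto
  define P where "P p \<longleftrightarrow> p \<noteq> [] \<and> distinct p \<and> set p \<subseteq> V \<and> ipath E p" for p
  obtain v where v: "v \<in> V" using assms(2) by auto
  have Pv: "P [v]" using v by (simp add: P_def ipath_def)
  have bnd: "\<forall>p. P p \<longrightarrow> length p < Suc (card V)"
  proof (intro allI impI)
    fix p assume "P p"
    then have "length p = card (set p)" using distinct_card[of p] by (simp add: P_def)
    moreover have "card (set p) \<le> card V" using fin \<open>P p\<close> by (auto simp: P_def intro: card_mono)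
    ultimately
    show "length p < Suc (card V)" by simp
  qed
  obtain p where Pp: "P p" and pmax: "\<And>q. P q \<Longrightarrow> length q \<le> length p"
    using Lattices_Big.ex_has_greatest_nat[of P "[v]" length "Suc (card V)", OF Pv bnd] by blast
  have pne: "p \<noteq> []" and pd: "distinct p" and pV: "set p \<subseteq> V" and pp: "ipath E p"
    using Pp by (auto simp: P_def)
  define x where "x = hd p"
  have x0: "p ! 0 = x" using pne by (simp add: x_def hd_conv_nth)
  have xV: "x \<in> V" using pne pV hd_in_set[of p] by (auto simp: x_def)
  have key: "\<And>y. E x y \<Longrightarrow> length p \<ge> 2 \<and> y = p ! 1"
  proof -
    fix y assume Exy: "E x y"
    have yin: "y \<in> set p"
    proof (rule ccontr)
      assume "y \<notin> set p"
      then have "P (y # p)" using Pp Exy inV sym unfolding P_def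
        by (auto simp: ipath_Cons x_def)
      then show False using pmax[of "y # p"] by simp
    qed
    then obtain j where j: "j < length p" "p ! j = y" by (auto simp: in_set_conv_nth)
    have "j \<noteq> 0" using j x0 irr Exy by (metis)
    show "length p \<ge> 2 \<and> y = p ! 1"
    proof (rule ccontr)
      assume nn: "\<not> (length p \<ge> 2 \<and> y = p ! 1)"
      have "j \<ge> 2" using \<open>j \<noteq> 0\<close> j nn by (cases j; cases "j - 1") auto
      define cs where "cs = take (Suc j) p"
      have "is_cycle V E cs"
        unfolding is_cycle_def
      proof (intro conjI allI impI)
        show "3 \<le> length cs" using \<open>j \<ge> 2\<close> j by (simp add: cs_def)
        show "distinct cs" using pd by (simp add: cs_def)
        show "set cs \<subseteq> V" using pV set_take_subset[of "Suc j" p] by (auto simp: cs_def)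
        fix i assume "Suc i < length cs"
        then show "E (cs ! i) (cs ! Suc i)" using pp by (simp add: cs_def ipath_def)
      next
        have "last cs = y" using j by (simp add: cs_def take_Suc_conv_app_nth)
        moreover have "hd cs = x" using pne by (simp add: cs_def x_def)
        ultimately show "E (last cs) (hd cs)" using Exy sym by simp
      qed
      then show False using nc by blast
    qed
  qed
  show ?thesis using xV key by blast
qed

lemma forest_restrict:
  assumes "forest V E" "W \<subseteq> V"
  shows "forest W (\<lambda>a b. E a b \<and> a \<in> W \<and> b \<in> W)"
proof -
  have sg: "simple_graph V E" and nc: "\<And>cs. \<not> is_cycle V E cs" using assms(1) unfolding forest_def by auto
  have "simple_graph W (\<lambda>a b. E a b \<and> a \<in> W \<and> b \<in> W)"
    using sg assms(2) finite_subset unfolding simple_graph_def by blast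
  moreover have "\<not> is_cycle W (\<lambda>a b. E a b \<and> a \<in> W \<and> b \<in> W) cs" for cs
    using nc[of cs] assms(2) unfolding is_cycle_def by blast
  ultimately show ?thesis unfolding forest_def by blast
qed

lemma bip_restrict:
  assumes "bipartition V E A B" "W \<subseteq> V"
  shows "bipartition W (\<lambda>a b. E a b \<and> a \<in> W \<and> b \<in> W) (A \<inter> W) (B \<inter> W)"
  using assms unfolding bipartition_def stable_set_def by blast

lemma stable_insert:
  assumes "simple_graph V E" "x \<in> V" "W = V - insert x {y. E x y}"
    "stable_set W (\<lambda>a b. E a b \<and> a \<in> W \<and> b \<in> W) X'"
  shows "stable_set V E (insert x X')"
  using assms unfolding stable_set_def simple_graph_def by blast

lemma gen:
  assumes "forest V E" "bipartition V E A B" "n \<le> card A"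
  shows "\<exists>X. stable_set V E X \<and> card (X \<inter> A) = n \<and> min (card A) (card B) \<le> card X"
  using assms
proof (induction "card V" arbitrary: V E A B n rule: less_induct)
  case less
  have sg: "simple_graph V E" using less.prems(1) unfolding forest_def by auto
  have fin: "finite V" and inV: "\<And>x y. E x y \<Longrightarrow> x \<in> V \<and> y \<in> V"
    and sym: "\<And>x y. E x y \<Longrightarrow> E y x" and irr: "\<And>x. \<not> E x x"
    using sg unfolding simple_graph_def by auto
  have AB: "A \<union> B = V" "A \<inter> B = {}" "stable_set V E A" "stable_set V E B"
    using less.prems(2) unfolding bipartition_def by auto
  have finA: "finite A" and finB: "finite B" using AB(1) fin by (metis finite_Un)+
  show ?case
  proof (cases "V = {}")
    case True
    then have "A = {}" "B = {}" using AB(1) by auto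
    then show ?thesis using less.prems(3) AB(3) by (intro exI[of _ "{}"]) (auto simp: stable_set_def)
  next
    case False
    obtain x where xV: "x \<in> V" and leaf: "\<And>y z. E x y \<Longrightarrow> E x z \<Longrightarrow> y = z"
      using forest_leaf[OF less.prems(1) False] by blast
    define N where "N = {y. E x y}"
    have NV: "N \<subseteq> V" using inV by (auto simp: N_def)
    have finN: "finite N" using NV fin finite_subset by blast
    have cN: "card N \<le> 1" using card_le_Suc0_iff_eq[OF finN] leaf by (auto simp: N_def)
    have xN: "x \<notin> N" using irr by (auto simp: N_def)
    define W where "W = V - insert x N"
    define E' where "E' = (\<lambda>a b. E a b \<and> a \<in> W \<and> b \<in> W)"
    have WV: "W \<subseteq> V" by (auto simp: W_def)
    have finW: "finite W" using fin WV finite_subset by blast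
    have cW: "card W < card V" using xV fin by (auto simp: W_def intro!: psubset_card_mono)
    have fW: "forest W E'" unfolding E'_def by (rule forest_restrict[OF less.prems(1) WV])
    have bW: "bipartition W E' (A \<inter> W) (B \<inter> W)" unfolding E'_def by (rule bip_restrict[OF less.prems(2) WV])
    have ins: "stable_set W E' X' \<Longrightarrow> stable_set V E (insert x X')" for X'
      using stable_insert[OF sg xV W_def[unfolded N_def]] by (simp add: E'_def N_def)
    have X'W: "stable_set W E' X' \<Longrightarrow> X' \<subseteq> W" for X' by (simp add: stable_set_def)
    have xW: "x \<notin> W" by (simp add: W_def)
    show ?thesis
    proof (cases "x \<in> A")
      case True
      have NB: "N \<subseteq> B" using AB NV True by (auto simp: stable_set_def N_def)
      have A': "A \<inter> W = A - {x}" using NB AB(1,2) by (auto simp: W_def)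
      have B': "B \<inter> W = B - N" using NB AB(1,2) True by (auto simp: W_def)
      have cA': "card (A \<inter> W) = card A - 1" using A' True finA by simp
      have cB': "card (B \<inter> W) = card B - card N" using B' NB finB by (simp add: card_Diff_subset finN)
      have cNB: "card N \<le> card B" using NB finB card_mono by blast
      have cA1: "card A \<ge> 1" using True finA by (metis One_nat_def Suc_leI card_gt_0_iff empty_iff)
      show ?thesis
      proof (cases "n = 0")
        case True
        then show ?thesis using AB Int_commute[of B A] by (intro exI[of _ B]) auto
      next
        case False
        have "n - 1 \<le> card (A \<inter> W)" using cA' less.prems(3) by simp
        from less.hyps[OF cW fW bW this] obtain X' where X':
          "stable_set W E' X'" "card (X' \<inter> (A \<inter> W)) = n - 1"
          "min (card (A \<inter> W)) (card (B \<inter> W)) \<le> card X'" by blast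
        have sub: "X' \<subseteq> W" using X'W X'(1) .
        have finX': "finite X'" using sub finW finite_subset by blast
        have "insert x X' \<inter> A = insert x (X' \<inter> (A \<inter> W))" using sub \<open>x \<in> A\<close> by auto
        then have c1: "card (insert x X' \<inter> A) = n" using xW sub finX' False X'(2) by auto
        have "x \<notin> X'" using xW sub by blast
        then have c2: "card (insert x X') = card X' + 1" using finX' by simp
        show ?thesis using ins[OF X'(1)] c1 c2 X'(3) cA' cB' cN cNB cA1
          by (intro exI[of _ "insert x X'"]) auto
      qed
    next
      case False
      then have xB: "x \<in> B" using xV AB(1) by auto
      have NA: "N \<subseteq> A" using AB NV xB by (auto simp: stable_set_def N_def)
      have A': "A \<inter> W = A - N" using NA AB(1,2) False by (auto simp: W_def)
      have B': "B \<inter> W = B - {x}" using NA AB(1,2) by (auto simp: W_def)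
      have cA': "card (A \<inter> W) = card A - card N" using A' NA finA by (simp add: card_Diff_subset finN)
      have cB': "card (B \<inter> W) = card B - 1" using B' xB finB by simp
      have cNA: "card N \<le> card A" using NA finA card_mono by blast
      have cB1: "card B \<ge> 1" using xB finB by (metis One_nat_def Suc_leI card_gt_0_iff empty_iff)
      show ?thesis
      proof (cases "n \<le> card A - card N")
        case False
        then have "n = card A" using cN less.prems(3) by linarith
        then show ?thesis using AB by (intro exI[of _ A]) auto
      next
        case True
        have "n \<le> card (A \<inter> W)" using cA' True by simp
        from less.hyps[OF cW fW bW this] obtain X' where X':
          "stable_set W E' X'" "card (X' \<inter> (A \<inter> W)) = n"
          "min (card (A \<inter> W)) (card (B \<inter> W)) \<le> card X'" by blast
        have sub: "X' \<subseteq> W" using X'W X'(1) .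
        have finX': "finite X'" using sub finW finite_subset by blast
        have "insert x X' \<inter> A = X' \<inter> (A \<inter> W)" using sub False by auto
        then have c1: "card (insert x X' \<inter> A) = n" using X'(2) by auto
        have "x \<notin> X'" using xW sub by blast
        then have c2: "card (insert x X') = card X' + 1" using finX' by simp
        show ?thesis using ins[OF X'(1)] c1 c2 X'(3) cA' cB' cN cNA cB1
          by (intro exI[of _ "insert x X'"]) auto
      qed
    qed
  qed
qed

theorem mainTheorem6:
  fixes V :: "'a set" and E :: "'a \<Rightarrow> 'a \<Rightarrow> bool" and A B :: "'a set" and n :: nat
  assumes "forest V E"
    and "bipartition V E A B"
    and "card A = card B"
    and "n \<le> card A"
  shows "\<exists>X. stable_set V E X \<and> card X = card A \<and> card (X \<inter> A) = n"
proof -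
  obtain X where X: "stable_set V E X" "card (X \<inter> A) = n" "min (card A) (card B) \<le> card X"
    using gen[OF assms(1,2,4)] by blast
  have fin: "finite V" using assms(1) unfolding forest_def simple_graph_def by auto
  have XV: "X \<subseteq> V" using X(1) by (simp add: stable_set_def)
  have finX: "finite X" using XV fin finite_subset by blast
  have AB: "A \<union> B = V" "A \<inter> B = {}" using assms(2) unfolding bipartition_def by auto
  have split: "X = (X \<inter> A) \<union> (X \<inter> B)" using XV AB by blast
  have disj: "(X \<inter> A) \<inter> (X \<inter> B) = {}" using AB by blast
  have "card X = card (X \<inter> A) + card (X \<inter> B)"
    using card_Un_disjoint[of "X \<inter> A" "X \<inter> B"] finX disj split by simp
  then have "card A - n \<le> card (X \<inter> B)" using X assms(3) by simp
  then obtain Y where Y: "Y \<subseteq> X \<inter> B" "card Y = card A - n"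
    using obtain_subset_with_card_n by metis
  define Z where "Z = (X \<inter> A) \<union> Y"
  have finY: "finite Y" using Y(1) finX finite_subset by blast
  have "card Z = card (X \<inter> A) + card Y"
    unfolding Z_def using Y(1) AB finX finY by (intro card_Un_disjoint) auto
  then have cZ: "card Z = card A" using X(2) Y(2) assms(4) by simp
  have ZA: "Z \<inter> A = X \<inter> A" using Y(1) AB by (auto simp: Z_def)
  have "stable_set V E Z" using X(1) Y(1) unfolding stable_set_def Z_def by blast
  then show ?thesis using cZ ZA X(2) by auto
qed

end
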